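(* For integers $n\ge0$ let $Z(n)=\sum_{k=0}^{n}(-3)^{n-3k}\binom{n}{3k}\binom{n+k}{n}\frac{(3k)!}{k!^3}$. Then for every $n\ge0$, $Z(n)$ equals the coefficient of $x_1^nx_2^nx_3^nx_4^n$ in the Taylor expansion of $$\frac{1}{1-(x_1+x_2+x_3+x_4)+27x_1x_2x_3x_4}.$$ *)

theory Defs
  imports Complex_Main "HOL-Computational_Algebra.Formal_Power_Series"
begin

text \<open>Formal power series in four variables x1,x2,x3,x4 over the rationals,
  realised as nested univariate formal power series. x1 is the outermost variable.\<close>

type_synonym fps4 = "rat fps fps fps fps"

definition X1 :: fps4 where "X1 = fps_X"
definition X2 :: fps4 where "X2 = fps_const fps_X"
definition X3 :: fps4 where "X3 = fps_const (fps_const fps_X)"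
definition X4 :: fps4 where "X4 = fps_const (fps_const (fps_const fps_X))"

definition coeff4 :: "fps4 \<Rightarrow> nat \<Rightarrow> nat \<Rightarrow> nat \<Rightarrow> nat \<Rightarrow> rat" where
  "coeff4 G a b c d = fps_nth (fps_nth (fps_nth (fps_nth G a) b) c) d"

text \<open>Taylor expansion of 1/D: the (unique) power series G with G * D = 1.\<close>
definition fps4_inv :: "fps4 \<Rightarrow> fps4" where
  "fps4_inv D = (THE G. G * D = 1)"

definition Zseq :: "nat \<Rightarrow> rat" where
  "Zseq n = (\<Sum>k = 0..n. (-3) powi (int n - 3 * int k) * of_nat (n choose (3*k))
      * of_nat ((n + k) choose n) * of_nat (fact (3*k)) / of_nat (fact k ^ 3))"

end

theory Submission
  imports Defs
begin


definition mn :: "nat \<Rightarrow> nat \<Rightarrow> nat \<Rightarrow> nat \<Rightarrow> nat \<Rightarrow> rat" where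
  "mn j a b c d = fact (j+a+b+c+d) / (fact j * fact a * fact b * fact c * fact d)"

lemma mn_p1: "(if j>0 then mn (j-1) a b c d else 0) = of_nat j * fact (j+a+b+c+d-1) / (fact j * fact a * fact b * fact c * fact d)"
  by (cases j) (simp_all add: mn_def fact_Suc field_simps del: of_nat_Suc)
lemma mn_p2: "(if a>0 then mn j (a-1) b c d else 0) = of_nat a * fact (j+a+b+c+d-1) / (fact j * fact a * fact b * fact c * fact d)"
  by (cases a) (simp_all add: mn_def fact_Suc field_simps del: of_nat_Suc)
lemma mn_p3: "(if b>0 then mn j a (b-1) c d else 0) = of_nat b * fact (j+a+b+c+d-1) / (fact j * fact a * fact b * fact c * fact d)"
  by (cases b) (simp_all add: mn_def fact_Suc field_simps del: of_nat_Suc)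
lemma mn_p4: "(if c>0 then mn j a b (c-1) d else 0) = of_nat c * fact (j+a+b+c+d-1) / (fact j * fact a * fact b * fact c * fact d)"
  by (cases c) (simp_all add: mn_def fact_Suc field_simps del: of_nat_Suc)
lemma mn_p5: "(if d>0 then mn j a b c (d-1) else 0) = of_nat d * fact (j+a+b+c+d-1) / (fact j * fact a * fact b * fact c * fact d)"
  by (cases d) (simp_all add: mn_def fact_Suc field_simps del: of_nat_Suc)

lemma mn_pascal:
  assumes "j+a+b+c+d > 0"
  shows "mn j a b c d = (if j>0 then mn (j-1) a b c d else 0) + (if a>0 then mn j (a-1) b c d else 0)
     + (if b>0 then mn j a (b-1) c d else 0) + (if c>0 then mn j a b (c-1) d else 0) + (if d>0 then mn j a b c (d-1) else 0)"
proof -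
  have f: "(fact (j+a+b+c+d) :: rat) = of_nat (j+a+b+c+d) * fact (j+a+b+c+d-1)"
    by (rule fact_reduce) (use assms in simp)
  define F where "F = (fact (j+a+b+c+d-1) :: rat)"
  define P where "P = (fact j * fact a * fact b * fact c * fact d :: rat)"
  have e: "of_nat j * F / P + of_nat a * F / P + of_nat b * F / P + of_nat c * F / P + of_nat d * F / P
      = of_nat (j+a+b+c+d) * F / P"
    by (simp only: of_nat_add distrib_right add_divide_distrib)
  have m: "mn j a b c d = of_nat (j+a+b+c+d) * F / P"
    unfolding mn_def F_def P_def f by (rule refl)
  show ?thesis unfolding mn_p1 mn_p2 mn_p3 mn_p4 mn_p5 F_def[symmetric] P_def[symmetric] e
    by (rule m)
qed

definition T :: "nat \<Rightarrow> nat \<Rightarrow> nat \<Rightarrow> nat \<Rightarrow> nat \<Rightarrow> rat" where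
  "T j a b c d = (if j \<le> a \<and> j \<le> b \<and> j \<le> c \<and> j \<le> d then (-27)^j * mn j (a-j) (b-j) (c-j) (d-j) else 0)"

lemma T_rec:
  assumes "\<not> (j=0 \<and> a=0 \<and> b=0 \<and> c=0 \<and> d=0)"
  shows "T j a b c d = (if a>0 then T j (a-1) b c d else 0) + (if b>0 then T j a (b-1) c d else 0)
    + (if c>0 then T j a b (c-1) d else 0) + (if d>0 then T j a b c (d-1) else 0)
    - 27 * (if j>0 \<and> a>0 \<and> b>0 \<and> c>0 \<and> d>0 then T (j-1) (a-1) (b-1) (c-1) (d-1) else 0)"
proof (cases "j \<le> a \<and> j \<le> b \<and> j \<le> c \<and> j \<le> d")
  case True
  have pos: "j + (a-j) + (b-j) + (c-j) + (d-j) > 0" using assms True by auto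
  note P = mn_pascal[OF pos]
  have h1: "(-27)^j * (if j>0 then mn (j-1) (a-j) (b-j) (c-j) (d-j) else 0)
     = - 27 * (if j>0 \<and> a>0 \<and> b>0 \<and> c>0 \<and> d>0 then T (j-1) (a-1) (b-1) (c-1) (d-1) else 0)"
  proof (cases j)
    case (Suc i)
    then show ?thesis using True by (auto simp: T_def)
  qed simp
  have h2: "(-27)^j * (if a-j>0 then mn j (a-j-1) (b-j) (c-j) (d-j) else 0) = (if a>0 then T j (a-1) b c d else 0)"
    using True by (auto simp: T_def)
  have h3: "(-27)^j * (if b-j>0 then mn j (a-j) (b-j-1) (c-j) (d-j) else 0) = (if b>0 then T j a (b-1) c d else 0)"
    using True by (auto simp: T_def)
  have h4: "(-27)^j * (if c-j>0 then mn j (a-j) (b-j) (c-j-1) (d-j) else 0) = (if c>0 then T j a b (c-1) d else 0)"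
    using True by (auto simp: T_def)
  have h5: "(-27)^j * (if d-j>0 then mn j (a-j) (b-j) (c-j) (d-j-1) else 0) = (if d>0 then T j a b c (d-1) else 0)"
    using True by (auto simp: T_def)
  have "T j a b c d = (-27)^j * mn j (a-j) (b-j) (c-j) (d-j)" using True by (simp add: T_def)
  also have "\<dots> = (-27)^j * (if j>0 then mn (j-1) (a-j) (b-j) (c-j) (d-j) else 0)
     + (-27)^j * (if a-j>0 then mn j (a-j-1) (b-j) (c-j) (d-j) else 0)
     + (-27)^j * (if b-j>0 then mn j (a-j) (b-j-1) (c-j) (d-j) else 0)
     + (-27)^j * (if c-j>0 then mn j (a-j) (b-j) (c-j-1) (d-j) else 0)
     + (-27)^j * (if d-j>0 then mn j (a-j) (b-j) (c-j) (d-j-1) else 0)"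
    by (subst P) (simp add: ring_distribs)
  finally show ?thesis unfolding h1 h2 h3 h4 h5 by simp
next
  case False
  have n1: "\<not> (j \<le> a-1 \<and> j \<le> b \<and> j \<le> c \<and> j \<le> d)" using False by linarith
  have n2: "\<not> (j \<le> a \<and> j \<le> b-1 \<and> j \<le> c \<and> j \<le> d)" using False by linarith
  have n3: "\<not> (j \<le> a \<and> j \<le> b \<and> j \<le> c-1 \<and> j \<le> d)" using False by linarith
  have n4: "\<not> (j \<le> a \<and> j \<le> b \<and> j \<le> c \<and> j \<le> d-1)" using False by linarith
  have n5: "j>0 \<and> a>0 \<and> b>0 \<and> c>0 \<and> d>0 \<Longrightarrow> \<not> (j-1 \<le> a-1 \<and> j-1 \<le> b-1 \<and> j-1 \<le> c-1 \<and> j-1 \<le> d-1)"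
    using False by linarith
  have z0: "T j a b c d = 0" unfolding T_def using False by (simp only: if_False)
  have z1: "T j (a-1) b c d = 0" unfolding T_def using n1 by (simp only: if_False)
  have z2: "T j a (b-1) c d = 0" unfolding T_def using n2 by (simp only: if_False)
  have z3: "T j a b (c-1) d = 0" unfolding T_def using n3 by (simp only: if_False)
  have z4: "T j a b c (d-1) = 0" unfolding T_def using n4 by (simp only: if_False)
  have z5: "(if j>0 \<and> a>0 \<and> b>0 \<and> c>0 \<and> d>0 then T (j-1) (a-1) (b-1) (c-1) (d-1) else 0) = 0"
  proof (cases "j>0 \<and> a>0 \<and> b>0 \<and> c>0 \<and> d>0")
    case True
    then have "\<not> (j-1 \<le> a-1 \<and> j-1 \<le> b-1 \<and> j-1 \<le> c-1 \<and> j-1 \<le> d-1)" using n5 by blast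
    then have "T (j-1) (a-1) (b-1) (c-1) (d-1) = 0" unfolding T_def by (simp only: if_False)
    then show ?thesis by simp
  qed auto
  show ?thesis unfolding z0 z1 z2 z3 z4 z5 by simp
qed

definition cf :: "nat \<Rightarrow> nat \<Rightarrow> nat \<Rightarrow> nat \<Rightarrow> rat" where
  "cf a b c d = (\<Sum>j\<le>a. T j a b c d)"

lemma cf_ext: assumes "a \<le> N" shows "cf a b c d = (\<Sum>j\<le>N. T j a b c d)"
  unfolding cf_def using assms
  by (intro sum.mono_neutral_left) (auto simp: T_def)

lemma cf_eq:
  "cf a b c d - (if a>0 then cf (a-1) b c d else 0) - (if b>0 then cf a (b-1) c d else 0)
    - (if c>0 then cf a b (c-1) d else 0) - (if d>0 then cf a b c (d-1) else 0)
    + 27 * (if a>0 \<and> b>0 \<and> c>0 \<and> d>0 then cf (a-1) (b-1) (c-1) (d-1) else 0)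
   = (if a=0 \<and> b=0 \<and> c=0 \<and> d=0 then 1 else 0)"
proof (cases "a=0 \<and> b=0 \<and> c=0 \<and> d=0")
  case True
  then show ?thesis by (simp add: cf_def T_def mn_def)
next
  case False
  have s1: "(if a>0 then cf (a-1) b c d else 0) = (\<Sum>j\<le>a. if a>0 then T j (a-1) b c d else 0)"
    by (auto simp: cf_ext)
  have s2: "(if b>0 then cf a (b-1) c d else 0) = (\<Sum>j\<le>a. if b>0 then T j a (b-1) c d else 0)"
    by (auto simp: cf_def)
  have s3: "(if c>0 then cf a b (c-1) d else 0) = (\<Sum>j\<le>a. if c>0 then T j a b (c-1) d else 0)"
    by (auto simp: cf_def)
  have s4: "(if d>0 then cf a b c (d-1) else 0) = (\<Sum>j\<le>a. if d>0 then T j a b c (d-1) else 0)"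
    by (auto simp: cf_def)
  have s5: "(if a>0 \<and> b>0 \<and> c>0 \<and> d>0 then cf (a-1) (b-1) (c-1) (d-1) else 0)
     = (\<Sum>j\<le>a. if j>0 \<and> a>0 \<and> b>0 \<and> c>0 \<and> d>0 then T (j-1) (a-1) (b-1) (c-1) (d-1) else 0)"
  proof (cases a)
    case 0
    then show ?thesis by simp
  next
    case (Suc i)
    show ?thesis unfolding Suc sum.atMost_Suc_shift by (simp add: cf_def)
  qed
  have "cf a b c d = (\<Sum>j\<le>a. (if a>0 then T j (a-1) b c d else 0) + (if b>0 then T j a (b-1) c d else 0)
    + (if c>0 then T j a b (c-1) d else 0) + (if d>0 then T j a b c (d-1) else 0)
    - 27 * (if j>0 \<and> a>0 \<and> b>0 \<and> c>0 \<and> d>0 then T (j-1) (a-1) (b-1) (c-1) (d-1) else 0))"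
    unfolding cf_def using False by (intro sum.cong refl T_rec) auto
  also have "\<dots> = (if a>0 then cf (a-1) b c d else 0) + (if b>0 then cf a (b-1) c d else 0)
    + (if c>0 then cf a b (c-1) d else 0) + (if d>0 then cf a b c (d-1) else 0)
    - 27 * (if a>0 \<and> b>0 \<and> c>0 \<and> d>0 then cf (a-1) (b-1) (c-1) (d-1) else 0)"
    unfolding s1 s2 s3 s4 s5 by (simp add: sum.distrib sum_subtractf sum_distrib_left)
  finally show ?thesis using False by simp
qed

definition G4 :: fps4 where
  "G4 = Abs_fps (\<lambda>a. Abs_fps (\<lambda>b. Abs_fps (\<lambda>c. Abs_fps (\<lambda>d. cf a b c d))))"

lemma coeff4_G4: "coeff4 G4 a b c d = cf a b c d"
  by (simp add: coeff4_def G4_def)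

lemma coeff4_ext: "(\<And>a b c d. coeff4 F a b c d = coeff4 H a b c d) \<Longrightarrow> F = H"
  by (intro fps_ext) (simp add: coeff4_def)

lemma coeff4_add: "coeff4 (F + H) a b c d = coeff4 F a b c d + coeff4 H a b c d"
  by (simp add: coeff4_def)
lemma coeff4_diff: "coeff4 (F - H) a b c d = coeff4 F a b c d - coeff4 H a b c d"
  by (simp add: coeff4_def)
lemma coeff4_one: "coeff4 1 a b c d = (if a=0 \<and> b=0 \<and> c=0 \<and> d=0 then 1 else 0)"
  by (simp add: coeff4_def)
lemma coeff4_27: "coeff4 (27 * F) a b c d = 27 * coeff4 F a b c d"
  by (simp add: coeff4_def numeral_fps_const)
lemma coeff4_X1: "coeff4 (X1 * F) a b c d = (if a > 0 then coeff4 F (a-1) b c d else 0)"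
  by (simp add: coeff4_def X1_def)
lemma coeff4_X2: "coeff4 (X2 * F) a b c d = (if b > 0 then coeff4 F a (b-1) c d else 0)"
  by (simp add: coeff4_def X2_def)
lemma coeff4_X3: "coeff4 (X3 * F) a b c d = (if c > 0 then coeff4 F a b (c-1) d else 0)"
  by (simp add: coeff4_def X3_def)
lemma coeff4_X4: "coeff4 (X4 * F) a b c d = (if d > 0 then coeff4 F a b c (d-1) else 0)"
  by (simp add: coeff4_def X4_def)

lemma G4_inv: "G4 * (1 - (X1 + X2 + X3 + X4) + 27 * X1 * X2 * X3 * X4) = 1"
proof -
  have "G4 * (1 - (X1 + X2 + X3 + X4) + 27 * X1 * X2 * X3 * X4)
     = G4 - X1 * G4 - X2 * G4 - X3 * G4 - X4 * G4 + 27 * (X1 * (X2 * (X3 * (X4 * G4))))"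
    by (simp add: algebra_simps)
  also have "\<dots> = 1"
  proof (rule coeff4_ext)
    fix a b c d
    show "coeff4 (G4 - X1 * G4 - X2 * G4 - X3 * G4 - X4 * G4 + 27 * (X1 * (X2 * (X3 * (X4 * G4))))) a b c d
       = coeff4 1 a b c d"
    proof -
      have nest: "(if a>0 then (if b>0 then (if c>0 then (if d>0 then x else 0) else 0) else 0) else 0)
         = (if a>0 \<and> b>0 \<and> c>0 \<and> d>0 then x else 0)" for x :: rat
        by simp
      show ?thesis
      using cf_eq[of a b c d]
      unfolding coeff4_add coeff4_diff coeff4_27 coeff4_X1 coeff4_X2 coeff4_X3 coeff4_X4 coeff4_one coeff4_G4 nest
      by simp
    qed
  qed
  finally show ?thesis .
qed

lemma inv_eq_G4: "fps4_inv (1 - (X1 + X2 + X3 + X4) + 27 * X1 * X2 * X3 * X4) = G4"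
  unfolding fps4_inv_def
proof (rule the_equality)
  show "G4 * (1 - (X1 + X2 + X3 + X4) + 27 * X1 * X2 * X3 * X4) = 1" by (rule G4_inv)
next
  fix G assume "G * (1 - (X1 + X2 + X3 + X4) + 27 * X1 * X2 * X3 * X4) = 1"
  then have D: "G * (1 - (X1 + X2 + X3 + X4) + 27 * X1 * X2 * X3 * X4) = 1" .
  have "G = G * (G4 * (1 - (X1 + X2 + X3 + X4) + 27 * X1 * X2 * X3 * X4))" using G4_inv by simp
  also have "\<dots> = (G * (1 - (X1 + X2 + X3 + X4) + 27 * X1 * X2 * X3 * X4)) * G4" by (simp only: ac_simps)
  also have "\<dots> = G4" using D by simp
  finally show "G = G4" .
qed

lemma coeff_diag: "coeff4 (fps4_inv (1 - (X1 + X2 + X3 + X4) + 27 * X1 * X2 * X3 * X4)) n n n n = cf n n n n"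
  by (simp add: inv_eq_G4 coeff4_G4)



definition Fz :: "nat \<Rightarrow> nat \<Rightarrow> rat" where
  "Fz n k = (if 3*k \<le> n then (-3)^(n-3*k) * fact (n+k) / (fact (n-3*k) * fact k ^ 4) else 0)"

lemma Fz_n: "Fz (N+1) k * (of_nat N + 1 - 3 * of_nat k) = -3 * (of_nat N + of_nat k + 1) * Fz N k"
proof (cases "3*k \<le> N")
  case True
  then obtain r where r: "N = 3*k + r" using le_Suc_ex by blast
  have e1: "3*k + r + 1 - 3*k = Suc r" by simp
  have e2: "3*k + r + 1 + k = Suc (3*k+r+k)" by simp
  have e3: "3*k + r - 3*k = r" by simp
  show ?thesis unfolding r Fz_def using e1 e2 e3
    by (simp add: field_simps del: of_nat_Suc) (simp add: algebra_simps)
next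
  case False
  show ?thesis
  proof (cases "3*k = N+1")
    case True
    then have "(of_nat N + 1 - 3 * of_nat k :: rat) = 0"
      by (metis add.commute of_nat_Suc of_nat_mult of_nat_numeral plus_1_eq_Suc right_minus_eq)
    then show ?thesis using False by (simp add: Fz_def)
  next
    case False2: False
    then show ?thesis using False by (simp add: Fz_def)
  qed
qed

lemma aux3: "(a::rat) * b * c \<noteq> 0 \<Longrightarrow> -m * a * b * c * (-27 / (a * b * c) * x) = 27 * m * x"
  by (simp add: field_simps)

lemma Fz_k: "27 * (of_nat k + 1)^4 * Fz N (k+1) = -(of_nat N + of_nat k + 1) * (of_nat N - 3*of_nat k)
    * (of_nat N - 3*of_nat k - 1) * (of_nat N - 3*of_nat k - 2) * Fz N k"
proof (cases "3*k+3 \<le> N")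
  case True
  then obtain r where r: "N = 3*k + 3 + r" using le_Suc_ex by blast
  have c1: "3*(k+1) \<le> N" and c2: "3*k \<le> N" using True by auto
  have f1: "fact (N + (k+1)) = (of_nat N + of_nat k + 1) * (fact (N+k) :: rat)"
    by (simp add: algebra_simps)
  have f2: "fact (N - 3*k) = (of_nat r+3)*(of_nat r+2)*(of_nat r+1) * (fact r :: rat)"
  proof -
    have "N - 3*k = Suc (Suc (Suc r))" using r by simp
    then show ?thesis by (simp add: algebra_simps)
  qed
  have f3: "N - 3*(k+1) = r" using r by simp
  have f4: "(-3::rat)^(N-3*k) = -27 * (-3)^r"
  proof -
    have "N - 3*k = r + 3" using r by simp
    then show ?thesis by (simp add: power_add)
  qed
  have f5: "fact (k+1) ^ 4 = (of_nat k + 1)^4 * (fact k ^ 4 :: rat)" by (simp add: power_mult_distrib add.commute)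
  have f6: "(of_nat N :: rat) = of_nat r + 3 * of_nat k + 3" using r by simp
  have nz: "(of_nat r + 1 :: rat) \<noteq> 0" "(of_nat r + 2 :: rat) \<noteq> 0" "(of_nat r + 3 :: rat) \<noteq> 0"
    "(of_nat k + 1 :: rat) \<noteq> 0" by (simp_all add: add_nonneg_pos)
  have fk: "(fact k :: rat) \<noteq> 0" "(fact r :: rat) \<noteq> 0" by simp_all
  define X where "X = (-3::rat)^r * fact (N+k) / (fact r * fact k ^ 4)"
  have A1: "Fz N (k+1) = (of_nat N + of_nat k + 1) / (of_nat k + 1)^4 * X"
    unfolding Fz_def X_def
    apply (simp only: c1 if_True)
    unfolding f1 f3 f5
    using nz fk by (simp add: field_simps)
  have A2: "Fz N k = -27 / ((of_nat r+3)*(of_nat r+2)*(of_nat r+1)) * X"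
    unfolding Fz_def X_def
    apply (simp only: c2 if_True)
    unfolding f2 f4
    using nz fk by (simp add: field_simps)
  have g1: "(of_nat N - 3*of_nat k :: rat) = of_nat r + 3" using f6 by simp
  have g2: "(of_nat N - 3*of_nat k - 1 :: rat) = of_nat r + 2" using f6 by simp
  have g3: "(of_nat N - 3*of_nat k - 2 :: rat) = of_nat r + 1" using f6 by simp
  have L: "27 * (of_nat k+1)^4 * Fz N (k+1) = 27*(of_nat N + of_nat k+1) * X"
    unfolding A1 using nz by (simp add: field_simps)
  have R: "-(of_nat N + of_nat k + 1) * (of_nat N - 3*of_nat k) * (of_nat N - 3*of_nat k - 1)
       * (of_nat N - 3*of_nat k - 2) * Fz N k = 27*(of_nat N + of_nat k+1) * X"
    unfolding A2 unfolding g2 g3 unfolding g1 by (rule aux3) (use nz in simp)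
  show ?thesis unfolding L R ..
next
  case False
  show ?thesis
  proof (cases "3*k \<le> N")
    case True
    then have D: "N = 3*k \<or> N = 3*k+1 \<or> N = 3*k+2" using False by linarith
    have F0: "Fz N (k+1) = 0" using False by (simp add: Fz_def)
    from D show ?thesis
    proof (elim disjE)
      assume "N = 3*k" then show ?thesis using F0 by simp
    next
      assume "N = 3*k+1" then show ?thesis using F0 by simp
    next
      assume "N = 3*k+2" then show ?thesis using F0 by simp
    qed
  next
    case False2: False
    then show ?thesis using False by (simp add: Fz_def)
  qed
qed

definition Hs :: "nat \<Rightarrow> nat \<Rightarrow> rat" where
  "Hs n m = (if m \<le> n then (-27)^(n-m) * fact (n+3*m) / (fact (n-m) * fact m ^ 4) else 0)"

lemma Hs_n: "Hs (N+1) m * (of_nat N + 1 - of_nat m) = -27 * (of_nat N + 3*of_nat m + 1) * Hs N m"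
proof (cases "m \<le> N")
  case True
  then obtain r where r: "N = m + r" using le_Suc_ex by blast
  have c1: "m \<le> N+1" and c2: "m \<le> N" using True by auto
  have f1: "fact (N + 1 + 3*m) = (of_nat N + 3*of_nat m + 1) * (fact (N+3*m) :: rat)"
  proof -
    have "N + 1 + 3*m = Suc (N+3*m)" by simp
    then show ?thesis by (simp add: algebra_simps)
  qed
  have f2: "fact (N + 1 - m) = (of_nat r + 1) * (fact r :: rat)"
  proof -
    have "N + 1 - m = Suc r" using r by simp
    then show ?thesis by (simp add: algebra_simps)
  qed
  have f3: "N - m = r" using r by simp
  have f4: "(-27::rat)^(N+1-m) = -27 * (-27)^r"
  proof -
    have "N + 1 - m = Suc r" using r by simp
    then show ?thesis by simp
  qed
  have g: "(of_nat N + 1 - of_nat m :: rat) = of_nat r + 1" using r by simp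
  have nz: "(of_nat r + 1 :: rat) \<noteq> 0" by (simp add: add_nonneg_pos)
  have fk: "(fact m :: rat) \<noteq> 0" "(fact r :: rat) \<noteq> 0" by simp_all
  define X where "X = (-27::rat)^r * fact (N+3*m) / (fact r * fact m ^ 4)"
  have A1: "Hs (N+1) m = -27 * (of_nat N + 3*of_nat m + 1) / (of_nat r + 1) * X"
    unfolding Hs_def X_def
    apply (simp only: c1 if_True)
    unfolding f1 f2 f4
    using nz fk by (simp add: field_simps)
  have A2: "Hs N m = X"
    unfolding Hs_def X_def
    by (simp only: c2 if_True f3)
  show ?thesis unfolding A1 A2 g using nz by (simp add: field_simps)
next
  case False
  show ?thesis
  proof (cases "m = N+1")
    case True
    then have "(of_nat N + 1 - of_nat m :: rat) = 0" by simp
    then show ?thesis using False by (simp add: Hs_def)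
  next
    case False2: False
    then show ?thesis using False by (simp add: Hs_def)
  qed
qed

lemma aux1: "(a::rat) \<noteq> 0 \<Longrightarrow> p * a * (-27 / a * x) = -27 * p * x"
  by (simp add: field_simps)

lemma Hs_k: "-27 * (of_nat m+1)^4 * Hs N (m+1) = (of_nat N + 3*of_nat m+1)*(of_nat N+3*of_nat m+2)
    *(of_nat N+3*of_nat m+3)*(of_nat N - of_nat m) * Hs N m"
proof (cases "m+1 \<le> N")
  case True
  then obtain r where r: "N = m + 1 + r" using le_Suc_ex by blast
  have c1: "m+1 \<le> N" and c2: "m \<le> N" using True by auto
  have f1: "fact (N + 3*(m+1)) = (of_nat N + 3*of_nat m + 3) * (of_nat N + 3*of_nat m + 2)
     * (of_nat N + 3*of_nat m + 1) * (fact (N+3*m) :: rat)"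
  proof -
    have e: "N + 3*(m+1) = Suc (Suc (Suc (N+3*m)))" by simp
    show ?thesis by (subst e) (simp add: algebra_simps)
  qed
  have f2: "fact (N - m) = (of_nat r + 1) * (fact r :: rat)"
  proof -
    have "N - m = Suc r" using r by simp
    then show ?thesis by (simp add: algebra_simps)
  qed
  have f3: "N - (m+1) = r" using r by simp
  have f4: "(-27::rat)^(N-m) = -27 * (-27)^r"
  proof -
    have "N - m = Suc r" using r by simp
    then show ?thesis by simp
  qed
  have f5: "fact (m+1) ^ 4 = (of_nat m + 1)^4 * (fact m ^ 4 :: rat)" by (simp add: power_mult_distrib add.commute)
  have g: "(of_nat N - of_nat m :: rat) = of_nat r + 1" using r by simp
  have nz: "(of_nat r + 1 :: rat) \<noteq> 0" "(of_nat m + 1 :: rat) \<noteq> 0" by (simp_all add: add_nonneg_pos)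
  have fk: "(fact m :: rat) \<noteq> 0" "(fact r :: rat) \<noteq> 0" by simp_all
  define X where "X = (-27::rat)^r * fact (N+3*m) / (fact r * fact m ^ 4)"
  define P where "P = (of_nat N + 3*of_nat m+1)*(of_nat N+3*of_nat m+2)*(of_nat N+3*of_nat m+3 :: rat)"
  have A1: "Hs N (m+1) = P / (of_nat m + 1)^4 * X"
    unfolding Hs_def X_def P_def
    apply (simp only: c1 if_True)
    unfolding f1 f3 f5
    using nz fk by (simp add: field_simps)
  have A2: "Hs N m = -27 / (of_nat r + 1) * X"
    unfolding Hs_def X_def
    apply (simp only: c2 if_True)
    unfolding f2 f4
    using nz fk by (simp add: field_simps)
  have L: "-27 * (of_nat m+1)^4 * Hs N (m+1) = -27 * P * X"
    unfolding A1 using nz by (simp add: field_simps)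
  have R: "P * (of_nat N - of_nat m) * Hs N m = -27 * P * X"
    unfolding A2 g by (rule aux1) (use nz in simp)
  show ?thesis using L R unfolding P_def by simp
next
  case False
  show ?thesis
  proof (cases "m = N")
    case True
    then show ?thesis using False by (simp add: Hs_def)
  next
    case False2: False
    then show ?thesis using False by (simp add: Hs_def)
  qed
qed


lemma Z_poly:
  fixes x y :: rat
  shows "27*(x+1)^3*(x+1-3*y)*(x+2-3*y) - (2*x+3)*(7*x^2+21*x+17)*(x+2-3*y)*(x+y+1) + 3*(x+2)^3*(x+y+1)*(x+y+2)
    = 4*(4*x+5)*(x+1-3*y)*(x+2-3*y)*(x-3*y)*(x+y+1) + 108*(4*x+5)*y^4"
  by (simp add: algebra_simps power2_eq_square power3_eq_cube power4_eq_xxxx)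

lemma Z_alg:
  fixes x y W :: rat
  assumes "x \<ge> 0" "y \<ge> 0"
  shows "81*(x+1)^3 * (-(x+1-3*y)/(3*(x+y+1)) * (-(x+2-3*y)/(3*(x+y+2)) * W))
    + (2*x+3)*(7*x^2+21*x+17) * (-(x+2-3*y)/(3*(x+y+2)) * W) + (x+2)^3 * W
   = -36*(4*x+5)*(y+1)^4 * (-(x+y+3)*(x+2-3*y)*(x+1-3*y)*(x-3*y) / (27 * (y + 1)^4) * W) / ((x+y+2)*(x+y+3))
     - -36*(4*x+5)*y^4 * W / ((x+y+1)*(x+y+2))"
proof -
  define u where "u = x+y+1"
  define v where "v = x+y+2"
  define z where "z = x+y+3"
  define t where "t = y+1"
  define a where "a = x+1-3*y"
  define b where "b = x+2-3*y"
  define c where "c = x-3*y"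
  define p where "p = (2*x+3)*(7*x^2+21*x+17)"
  define q where "q = 4*x+5"
  have nz: "u \<noteq> 0" "v \<noteq> 0" "z \<noteq> 0" "t \<noteq> 0" unfolding u_def v_def z_def t_def using assms by linarith+
  have P: "27*(x+1)^3*a*b - p*b*u + 3*(x+2)^3*u*v = 4*q*a*b*c*u + 108*q*y^4"
    unfolding a_def b_def c_def u_def v_def p_def q_def by (rule Z_poly)
  have "81*(x+1)^3 * (-a/(3*u) * (-b/(3*v) * W)) + p * (-b/(3*v) * W) + (x+2)^3 * W
     = (27*(x+1)^3*a*b - p*b*u + 3*(x+2)^3*u*v) * W / (3*u*v)"
    using nz by (simp add: field_simps)
  also have "\<dots> = (4*q*a*b*c*u + 108*q*y^4) * W / (3*u*v)" unfolding P ..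
  also have "\<dots> = -36*q*t^4 * (-z*b*a*c / (27 * t^4) * W) / (v*z) - -36*q*y^4 * W / (u*v)"
    using nz by (simp add: field_simps)
  finally show ?thesis unfolding u_def v_def z_def t_def a_def b_def c_def p_def q_def .
qed

definition Gz :: "nat \<Rightarrow> nat \<Rightarrow> rat" where
  "Gz n k = -36*(4*of_nat n+5)*of_nat k^4 * Fz (n+2) k / ((of_nat n+of_nat k+1)*(of_nat n+of_nat k+2))"

lemma Z_pt: "81*(of_nat n+1)^3 * Fz n k + (2*of_nat n+3)*(7*of_nat n^2+21*of_nat n+17) * Fz (n+1) k
   + (of_nat n+2)^3 * Fz (n+2) k = Gz n (k+1) - Gz n k"
proof -
  define x where "x = (of_nat n :: rat)"
  define y where "y = (of_nat k :: rat)"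
  have x0: "x \<ge> 0" "y \<ge> 0" unfolding x_def y_def by simp_all
  have nz: "x+y+1 \<noteq> 0" "x+y+2 \<noteq> 0" "x+y+3 \<noteq> 0" "y+1 \<noteq> 0" using x0 by linarith+
  have h1: "Fz (n+2) k * (x + 2 - 3*y) = -3*(x+y+2) * Fz (n+1) k"
    using Fz_n[of "n+1" k] unfolding x_def y_def by (simp add: algebra_simps)
  have r1: "Fz (n+1) k = -(x+2-3*y)/(3*(x+y+2)) * Fz (n+2) k"
    using h1 nz by (simp add: field_simps)
  have h0: "Fz (n+1) k * (x + 1 - 3*y) = -3*(x+y+1) * Fz n k"
    using Fz_n[of n k] unfolding x_def y_def by (simp add: algebra_simps)
  have r0: "Fz n k = -(x+1-3*y)/(3*(x+y+1)) * Fz (n+1) k"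
    using h0 nz by (simp add: field_simps)
  have hk: "27 * (y + 1)^4 * Fz (n+2) (k+1) = -(x+2+y+1)*(x+2-3*y)*(x+2-3*y-1)*(x+2-3*y-2) * Fz (n+2) k"
    using Fz_k[of k "n+2"] unfolding x_def y_def by (simp add: algebra_simps)
  have rk: "Fz (n+2) (k+1) = -(x+y+3)*(x+2-3*y)*(x+1-3*y)*(x-3*y) / (27 * (y + 1)^4) * Fz (n+2) k"
    using hk nz by (simp add: field_simps)
  have G1: "Gz n (k+1) = -36*(4*x+5)*(y+1)^4 * Fz (n+2) (k+1) / ((x+y+2)*(x+y+3))"
    unfolding Gz_def x_def y_def by (simp add: algebra_simps)
  have G0: "Gz n k = -36*(4*x+5)*y^4 * Fz (n+2) k / ((x+y+1)*(x+y+2))"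
    unfolding Gz_def x_def y_def by simp
  show ?thesis
    unfolding x_def[symmetric] G1 G0 rk r0 unfolding r1
    by (rule Z_alg) (use x0 in auto)
qed

lemma H_poly:
  fixes x y :: rat
  shows "3*(x+1)^3*(x+1-y)*(x+2-y) - (2*x+3)*(7*x^2+21*x+17)*(x+2-y)*(x+3*y+1) + 27*(x+2)^3*(x+3*y+1)*(x+3*y+2)
    = 4*(4*x+7)*(x+3*y+3)*(x+2-y)*(x+3*y+1)*(x+3*y+2) + 108*(4*x+7)*y^4"
  by (simp add: algebra_simps power2_eq_square power3_eq_cube power4_eq_xxxx)

lemma H_alg:
  fixes x y W :: rat
  assumes "x \<ge> 0" "y \<ge> 0"
  shows "81*(x+1)^3 * (-(x+1-y)/(27*(x+3*y+1)) * (-(x+2-y)/(27*(x+3*y+2)) * W))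
    + (2*x+3)*(7*x^2+21*x+17) * (-(x+2-y)/(27*(x+3*y+2)) * W) + (x+2)^3 * W
   = -4*(4*x+7)*(y+1)^4 * (-(x+3*y+3)*(x+3*y+4)*(x+3*y+5)*(x+2-y) / (27 * (y + 1)^4) * W) / ((x+3*y+4)*(x+3*y+5))
     - -4*(4*x+7)*y^4 * W / ((x+3*y+1)*(x+3*y+2))"
proof -
  define u where "u = x+3*y+1"
  define v where "v = x+3*y+2"
  define z where "z = x+3*y+3"
  define z4 where "z4 = x+3*y+4"
  define z5 where "z5 = x+3*y+5"
  define t where "t = y+1"
  define a where "a = x+1-y"
  define b where "b = x+2-y"
  define p where "p = (2*x+3)*(7*x^2+21*x+17)"
  define q where "q = 4*x+7"
  have nz: "u \<noteq> 0" "v \<noteq> 0" "z4 \<noteq> 0" "z5 \<noteq> 0" "t \<noteq> 0"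
    unfolding u_def v_def z4_def z5_def t_def using assms by linarith+
  have P: "3*(x+1)^3*a*b - p*b*u + 27*(x+2)^3*u*v = 4*q*z*b*u*v + 108*q*y^4"
    unfolding a_def b_def z_def u_def v_def p_def q_def by (rule H_poly)
  have "81*(x+1)^3 * (-a/(27*u) * (-b/(27*v) * W)) + p * (-b/(27*v) * W) + (x+2)^3 * W
     = (3*(x+1)^3*a*b - p*b*u + 27*(x+2)^3*u*v) * W / (27*u*v)"
    using nz by (simp add: field_simps)
  also have "\<dots> = (4*q*z*b*u*v + 108*q*y^4) * W / (27*u*v)" unfolding P ..
  also have "\<dots> = -4*q*t^4 * (-z*z4*z5*b / (27 * t^4) * W) / (z4*z5) - -4*q*y^4 * W / (u*v)"
    using nz by (simp add: field_simps)
  finally show ?thesis unfolding u_def v_def z_def z4_def z5_def t_def a_def b_def p_def q_def .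
qed

definition Gh :: "nat \<Rightarrow> nat \<Rightarrow> rat" where
  "Gh n m = -4*(4*of_nat n+7)*of_nat m^4 * Hs (n+2) m / ((of_nat n+3*of_nat m+1)*(of_nat n+3*of_nat m+2))"

lemma H_pt: "81*(of_nat n+1)^3 * Hs n k + (2*of_nat n+3)*(7*of_nat n^2+21*of_nat n+17) * Hs (n+1) k
   + (of_nat n+2)^3 * Hs (n+2) k = Gh n (k+1) - Gh n k"
proof -
  define x where "x = (of_nat n :: rat)"
  define y where "y = (of_nat k :: rat)"
  have x0: "x \<ge> 0" "y \<ge> 0" unfolding x_def y_def by simp_all
  have nz: "x+3*y+1 \<noteq> 0" "x+3*y+2 \<noteq> 0" "y+1 \<noteq> 0" using x0 by linarith+
  have h1: "Hs (n+2) k * (x + 2 - y) = -27*(x+3*y+2) * Hs (n+1) k"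
    using Hs_n[of "n+1" k] unfolding x_def y_def by (simp add: algebra_simps)
  have r1: "Hs (n+1) k = -(x+2-y)/(27*(x+3*y+2)) * Hs (n+2) k"
    using h1 nz by (simp add: field_simps)
  have h0: "Hs (n+1) k * (x + 1 - y) = -27*(x+3*y+1) * Hs n k"
    using Hs_n[of n k] unfolding x_def y_def by (simp add: algebra_simps)
  have r0: "Hs n k = -(x+1-y)/(27*(x+3*y+1)) * Hs (n+1) k"
    using h0 nz by (simp add: field_simps)
  have hk: "-27 * (y + 1)^4 * Hs (n+2) (k+1) = (x+3*y+3)*(x+3*y+4)*(x+3*y+5)*(x+2-y) * Hs (n+2) k"
    using Hs_k[of k "n+2"] unfolding x_def y_def by (simp add: algebra_simps)
  have rk: "Hs (n+2) (k+1) = -(x+3*y+3)*(x+3*y+4)*(x+3*y+5)*(x+2-y) / (27 * (y + 1)^4) * Hs (n+2) k"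
    using hk nz by (simp add: field_simps)
  have G1: "Gh n (k+1) = -4*(4*x+7)*(y+1)^4 * Hs (n+2) (k+1) / ((x+3*y+4)*(x+3*y+5))"
    unfolding Gh_def x_def y_def by (simp add: algebra_simps)
  have G0: "Gh n k = -4*(4*x+7)*y^4 * Hs (n+2) k / ((x+3*y+1)*(x+3*y+2))"
    unfolding Gh_def x_def y_def by simp
  show ?thesis
    unfolding x_def[symmetric] G1 G0 rk r0 unfolding r1
    by (rule H_alg) (use x0 in auto)
qed


lemma Zterm: "(-3) powi (int n - 3 * int k) * of_nat (n choose (3*k)) * of_nat ((n + k) choose n)
      * of_nat (fact (3*k)) / of_nat (fact k ^ 3) = Fz n k"
proof (cases "3*k \<le> n")
  case True
  have e1: "int n - 3 * int k = int (n - 3*k)" using True by simp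
  have b1: "(of_nat (n choose (3*k)) :: rat) = fact n / (fact (3*k) * fact (n - 3*k))"
    using True by (rule binomial_fact)
  have b2: "(of_nat ((n+k) choose n) :: rat) = fact (n+k) / (fact n * fact k)"
    using binomial_fact[of n "n+k", where 'a=rat] by simp
  have fk: "(fact k :: rat) \<noteq> 0" "(fact n :: rat) \<noteq> 0" "(fact (3*k) :: rat) \<noteq> 0" "(fact (n-3*k) :: rat) \<noteq> 0"
    by simp_all
  have pw: "(-3::rat) powi (int n - 3 * int k) = (-3)^(n-3*k)" unfolding e1 by (rule power_int_of_nat)
  show ?thesis unfolding pw b1 b2 Fz_def using True fk
    by (simp add: field_simps power4_eq_xxxx power3_eq_cube)
next
  case False
  then have "n choose (3*k) = 0" by simp
  then show ?thesis using False by (simp add: Fz_def)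
qed

lemma Zseq_sum: assumes "n < N" shows "Zseq n = (\<Sum>k<N. Fz n k)"
proof -
  have "Zseq n = (\<Sum>k=0..n. Fz n k)" unfolding Zseq_def Zterm ..
  also have "\<dots> = (\<Sum>k<Suc n. Fz n k)" by (simp add: atLeast0AtMost lessThan_Suc_atMost)
  also have "\<dots> = (\<Sum>k<N. Fz n k)"
    using assms by (intro sum.mono_neutral_left) (auto simp: Fz_def)
  finally show ?thesis .
qed

lemma S_sum: assumes "n < N" shows "cf n n n n = (\<Sum>m<N. Hs n m)"
proof -
  have "cf n n n n = (\<Sum>j=0..n. T j n n n n)" unfolding cf_def by (simp add: atLeast0AtMost)
  also have "\<dots> = (\<Sum>m=0..n. T (n - m) n n n n)"
    by (subst sum.atLeastAtMost_rev) simp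
  also have "\<dots> = (\<Sum>m=0..n. Hs n m)"
  proof (rule sum.cong[OF refl])
    fix m assume "m \<in> {0..n}"
    then have m: "m \<le> n" by simp
    have e: "n - m + m + m + m + m = n + 3*m" using m by simp
    have e2: "n - (n - m) = m" using m by simp
    have e3: "n + m + m + m = n + 3*m" by simp
    show "T (n - m) n n n n = Hs n m"
      unfolding T_def Hs_def mn_def e2 using m by (simp add: e e3 power4_eq_xxxx mult.assoc)
  qed
  also have "\<dots> = (\<Sum>m<Suc n. Hs n m)" by (simp add: atLeast0AtMost lessThan_Suc_atMost)
  also have "\<dots> = (\<Sum>m<N. Hs n m)"
    using assms by (intro sum.mono_neutral_left) (auto simp: Hs_def)
  finally show ?thesis .
qed

lemma Z_rec: "81*(of_nat n+1)^3 * Zseq n + (2*of_nat n+3)*(7*of_nat n^2+21*of_nat n+17) * Zseq (n+1)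
   + (of_nat n+2)^3 * Zseq (n+2) = 0"
proof -
  let ?N = "n+3"
  have "81*(of_nat n+1)^3 * Zseq n + (2*of_nat n+3)*(7*of_nat n^2+21*of_nat n+17) * Zseq (n+1)
   + (of_nat n+2)^3 * Zseq (n+2) = (\<Sum>k<?N. 81*(of_nat n+1)^3 * Fz n k + (2*of_nat n+3)*(7*of_nat n^2+21*of_nat n+17) * Fz (n+1) k
   + (of_nat n+2)^3 * Fz (n+2) k)"
    using Zseq_sum[of n ?N] Zseq_sum[of "n+1" ?N] Zseq_sum[of "n+2" ?N]
    by (simp add: sum.distrib sum_distrib_left)
  also have "\<dots> = (\<Sum>k<?N. Gz n (Suc k) - Gz n k)" unfolding Z_pt by simp
  also have "\<dots> = Gz n ?N - Gz n 0" by (rule sum_lessThan_telescope)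
  also have "\<dots> = 0" by (simp add: Gz_def Fz_def)
  finally show ?thesis .
qed

lemma S_rec: "81*(of_nat n+1)^3 * cf n n n n + (2*of_nat n+3)*(7*of_nat n^2+21*of_nat n+17) * cf (n+1) (n+1) (n+1) (n+1)
   + (of_nat n+2)^3 * cf (n+2) (n+2) (n+2) (n+2) = 0"
proof -
  let ?N = "n+3"
  have "81*(of_nat n+1)^3 * cf n n n n + (2*of_nat n+3)*(7*of_nat n^2+21*of_nat n+17) * cf (n+1) (n+1) (n+1) (n+1)
   + (of_nat n+2)^3 * cf (n+2) (n+2) (n+2) (n+2) = (\<Sum>k<?N. 81*(of_nat n+1)^3 * Hs n k + (2*of_nat n+3)*(7*of_nat n^2+21*of_nat n+17) * Hs (n+1) k
   + (of_nat n+2)^3 * Hs (n+2) k)"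
    using S_sum[of n ?N] S_sum[of "n+1" ?N] S_sum[of "n+2" ?N]
    by (simp add: sum.distrib sum_distrib_left)
  also have "\<dots> = (\<Sum>k<?N. Gh n (Suc k) - Gh n k)" unfolding H_pt by simp
  also have "\<dots> = Gh n ?N - Gh n 0" by (rule sum_lessThan_telescope)
  also have "\<dots> = 0" by (simp add: Gh_def Hs_def)
  finally show ?thesis .
qed

lemma Z0: "Zseq 0 = 1" by (simp add: Zseq_def)
lemma Z1: "Zseq 1 = -3" by (simp add: Zseq_def)
lemma S0: "cf 0 0 0 0 = 1" by (simp add: cf_def T_def mn_def)
lemma S1: "cf 1 1 1 1 = -3" by (simp add: cf_def T_def mn_def fact_numeral)

lemma Z_eq_S: "Zseq n = cf n n n n \<and> Zseq (n+1) = cf (n+1) (n+1) (n+1) (n+1)"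
proof (induction n)
  case 0
  then show ?case using Z0 Z1 S0 S1 by simp
next
  case (Suc n)
  define p0 where "p0 = (81*(of_nat n+1)^3 :: rat)"
  define p1 where "p1 = ((2*of_nat n+3)*(7*of_nat n^2+21*of_nat n+17) :: rat)"
  define p2 where "p2 = ((of_nat n+2)^3 :: rat)"
  have p2: "p2 \<noteq> 0" unfolding p2_def by (simp add: add_nonneg_pos)
  have a: "p0 * Zseq n + p1 * Zseq (n+1) + p2 * Zseq (n+2) = 0" using Z_rec[of n] unfolding p0_def p1_def p2_def .
  have b: "p0 * cf n n n n + p1 * cf (n+1) (n+1) (n+1) (n+1) + p2 * cf (n+2) (n+2) (n+2) (n+2) = 0"
    using S_rec[of n] unfolding p0_def p1_def p2_def .
  have i1: "p0 * Zseq n = p0 * cf n n n n" "p1 * Zseq (n+1) = p1 * cf (n+1) (n+1) (n+1) (n+1)"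
    using Suc.IH by simp_all
  have "p2 * Zseq (n+2) = p2 * cf (n+2) (n+2) (n+2) (n+2)" using a b i1 by linarith
  then have "Zseq (n+2) = cf (n+2) (n+2) (n+2) (n+2)" using p2 by simp
  then show ?case using Suc.IH by simp
qed

theorem mainTheorem9:
  fixes n :: nat
  shows "coeff4 (fps4_inv (1 - (X1 + X2 + X3 + X4) + 27 * X1 * X2 * X3 * X4)) n n n n = Zseq n"
  using coeff_diag[of n] Z_eq_S[of n] by simp

end
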